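(* Let $\{S_i\mid i\in I\}$ be a collection of semigroups and let $F=\prod^{*}\{S_i\mid i\in I\}$ be their semigroup free product. Then $F^1$ is finitely right equated if and only if each $S_i^1$ ($i\in I$) is finitely right equated.
   Context: $S^1$ denotes $S$ if $S$ is a monoid and otherwise $S$ with an identity adjoined. For a semigroup $S$ and $a\in S$, $\mathbf{r}_S(a)=\{(s,t)\in S\times S\mid as=at\}$; $S$ is finitely right equated if each $\mathbf{r}_S(a)$ is finitely generated as a right congruence. The semigroup free product of pairwise disjoint semigroups $S_i$ consists of sequences $s_1*\dots*s_n$ with $s_j\in\bigsqcup S_i$ and consecutive entries from different $S_i$, multiplied by concatenation, multiplying the two adjacent entries if they lie in the same $S_i$. *)

theory Defs
  imports Main
begin

record 'a sgrp =
  sg_carrier :: "'a set"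
  sg_mult :: "'a \<Rightarrow> 'a \<Rightarrow> 'a"

definition is_semigroup :: "'a sgrp \<Rightarrow> bool" where
  "is_semigroup S \<longleftrightarrow>
     (\<forall>x\<in>sg_carrier S. \<forall>y\<in>sg_carrier S. sg_mult S x y \<in> sg_carrier S) \<and>
     (\<forall>x\<in>sg_carrier S. \<forall>y\<in>sg_carrier S. \<forall>z\<in>sg_carrier S.
        sg_mult S (sg_mult S x y) z = sg_mult S x (sg_mult S y z))"

definition is_monoid_sg :: "'a sgrp \<Rightarrow> bool" where
  "is_monoid_sg S \<longleftrightarrow>
     (\<exists>e\<in>sg_carrier S. \<forall>x\<in>sg_carrier S. sg_mult S e x = x \<and> sg_mult S x e = x)"

text \<open>S^1: S itself if S is a monoid, otherwise S with a new identity adjoined.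
  Elements are tagged with Some; the adjoined identity is None.\<close>
definition adjoin_one :: "'a sgrp \<Rightarrow> 'a option sgrp" where
  "adjoin_one S =
     (if is_monoid_sg S then
        \<lparr> sg_carrier = Some ` sg_carrier S,
          sg_mult = (\<lambda>x y. Some (sg_mult S (the x) (the y))) \<rparr>
      else
        \<lparr> sg_carrier = insert None (Some ` sg_carrier S),
          sg_mult = (\<lambda>x y. case x of None \<Rightarrow> y
                                   | Some a \<Rightarrow> (case y of None \<Rightarrow> Some a
                                                      | Some b \<Rightarrow> Some (sg_mult S a b))) \<rparr>)"

definition right_congruence :: "'a sgrp \<Rightarrow> ('a \<times> 'a) set \<Rightarrow> bool" where
  "right_congruence T \<rho> \<longleftrightarrow> equiv (sg_carrier T) \<rho> \<and>
     (\<forall>s t u. (s, t) \<in> \<rho> \<longrightarrow> u \<in> sg_carrier T \<longrightarrow> (sg_mult T s u, sg_mult T t u) \<in> \<rho>)"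

definition rcong_gen :: "'a sgrp \<Rightarrow> ('a \<times> 'a) set \<Rightarrow> ('a \<times> 'a) set" where
  "rcong_gen T X = \<Inter> {\<rho>. right_congruence T \<rho> \<and> X \<subseteq> \<rho>}"

definition fin_gen_right_congruence :: "'a sgrp \<Rightarrow> ('a \<times> 'a) set \<Rightarrow> bool" where
  "fin_gen_right_congruence T \<rho> \<longleftrightarrow>
     (\<exists>X. finite X \<and> X \<subseteq> sg_carrier T \<times> sg_carrier T \<and> rcong_gen T X = \<rho>)"

definition r_ann :: "'a sgrp \<Rightarrow> 'a \<Rightarrow> ('a \<times> 'a) set" where
  "r_ann S a = {(s, t). s \<in> sg_carrier S \<and> t \<in> sg_carrier S \<and> sg_mult S a s = sg_mult S a t}"

definition fin_right_equated :: "'a sgrp \<Rightarrow> bool" where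
  "fin_right_equated S \<longleftrightarrow> (\<forall>a\<in>sg_carrier S. fin_gen_right_congruence S (r_ann S a))"

text \<open>The factors are made pairwise
  disjoint by tagging elements with their index: an element of the disjoint union is a pair
  (i, s) with i in I and s in S i.\<close>
definition fp_carrier :: "'i set \<Rightarrow> ('i \<Rightarrow> 'a sgrp) \<Rightarrow> ('i \<times> 'a) list set" where
  "fp_carrier I S = {w. w \<noteq> [] \<and> (\<forall>k<length w. fst (w ! k) \<in> I \<and> snd (w ! k) \<in> sg_carrier (S (fst (w ! k)))) \<and>
                         (\<forall>k. Suc k < length w \<longrightarrow> fst (w ! k) \<noteq> fst (w ! Suc k))}"

definition fp_mult :: "('i \<Rightarrow> 'a sgrp) \<Rightarrow> ('i \<times> 'a) list \<Rightarrow> ('i \<times> 'a) list \<Rightarrow> ('i \<times> 'a) list" where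
  "fp_mult S u v =
     (if u = [] then v else if v = [] then u
      else if fst (last u) = fst (hd v)
      then butlast u @ [(fst (last u), sg_mult (S (fst (last u))) (snd (last u)) (snd (hd v)))] @ tl v
      else u @ v)"

definition free_product :: "'i set \<Rightarrow> ('i \<Rightarrow> 'a sgrp) \<Rightarrow> ('i \<times> 'a) list sgrp" where
  "free_product I S = \<lparr> sg_carrier = fp_carrier I S, sg_mult = fp_mult S \<rparr>"

end

theory Submission
  imports Defs
begin

section \<open>Generic congruence facts\<close>

lemma rc_iff: "right_congruence T \<rho> \<longleftrightarrow> \<rho> \<subseteq> sg_carrier T \<times> sg_carrier T \<and>
   (\<forall>x\<in>sg_carrier T. (x,x)\<in>\<rho>) \<and> (\<forall>x y. (x,y)\<in>\<rho> \<longrightarrow> (y,x)\<in>\<rho>) \<and>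
   (\<forall>x y z. (x,y)\<in>\<rho> \<longrightarrow> (y,z)\<in>\<rho> \<longrightarrow> (x,z)\<in>\<rho>) \<and>
   (\<forall>s t u. (s,t)\<in>\<rho> \<longrightarrow> u \<in> sg_carrier T \<longrightarrow> (sg_mult T s u, sg_mult T t u) \<in> \<rho>)"
  unfolding right_congruence_def equiv_def refl_on_def sym_def trans_def by blast

lemma rcg_rc:
  assumes cl: "\<forall>x\<in>sg_carrier T. \<forall>y\<in>sg_carrier T. sg_mult T x y \<in> sg_carrier T"
    and X: "X \<subseteq> sg_carrier T \<times> sg_carrier T"
  shows "right_congruence T (rcong_gen T X)"
proof -
  let ?C = "sg_carrier T"
  let ?F = "{\<rho>. right_congruence T \<rho> \<and> X \<subseteq> \<rho>}"
  have full: "?C \<times> ?C \<in> ?F" using cl X by (auto simp: rc_iff)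
  have m: "\<And>\<rho>. \<rho> \<in> ?F \<Longrightarrow> right_congruence T \<rho>" by blast
  show ?thesis unfolding rcong_gen_def rc_iff[of T "\<Inter>?F"]
  proof (intro conjI allI impI ballI)
    show "\<Inter>?F \<subseteq> ?C \<times> ?C" using full by blast
  next
    fix x assume x: "x \<in> ?C" show "(x,x) \<in> \<Inter>?F"
    proof (rule InterI)
      fix \<rho> assume "\<rho> \<in> ?F"
      then have "right_congruence T \<rho>" by auto
      then show "(x,x) \<in> \<rho>" using x unfolding rc_iff by blast
    qed
  next
    fix x y assume a: "(x,y) \<in> \<Inter>?F" show "(y,x) \<in> \<Inter>?F"
    proof (rule InterI)
      fix \<rho> assume "\<rho> \<in> ?F"
      then have "right_congruence T \<rho>" "(x,y) \<in> \<rho>" using a by auto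
      then show "(y,x) \<in> \<rho>" unfolding rc_iff by blast
    qed
  next
    fix x y z assume a: "(x,y) \<in> \<Inter>?F" "(y,z) \<in> \<Inter>?F" show "(x,z) \<in> \<Inter>?F"
    proof (rule InterI)
      fix \<rho> assume "\<rho> \<in> ?F"
      then have "right_congruence T \<rho>" "(x,y) \<in> \<rho>" "(y,z) \<in> \<rho>" using a by auto
      then show "(x,z) \<in> \<rho>" unfolding rc_iff by blast
    qed
  next
    fix s t u assume a: "(s,t) \<in> \<Inter>?F" "u \<in> ?C"
    show "(sg_mult T s u, sg_mult T t u) \<in> \<Inter>?F"
    proof (rule InterI)
      fix \<rho> assume "\<rho> \<in> ?F"
      then have "right_congruence T \<rho>" "(s,t) \<in> \<rho>" using a by auto
      then show "(sg_mult T s u, sg_mult T t u) \<in> \<rho>" using a unfolding rc_iff by blast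
    qed
  qed
qed

lemma rcg_least: "right_congruence T \<rho> \<Longrightarrow> X \<subseteq> \<rho> \<Longrightarrow> rcong_gen T X \<subseteq> \<rho>"
  by (auto simp: rcong_gen_def)

lemma rann_rc:
  assumes "is_semigroup T" "a \<in> sg_carrier T"
  shows "right_congruence T (r_ann T a)"
proof -
  have comp: "\<And>s t u. s \<in> sg_carrier T \<Longrightarrow> t \<in> sg_carrier T \<Longrightarrow> u \<in> sg_carrier T \<Longrightarrow>
     sg_mult T a s = sg_mult T a t \<Longrightarrow> sg_mult T a (sg_mult T s u) = sg_mult T a (sg_mult T t u)"
  proof -
    have assoc: "\<forall>x\<in>sg_carrier T. \<forall>y\<in>sg_carrier T. \<forall>z\<in>sg_carrier T.
        sg_mult T (sg_mult T x y) z = sg_mult T x (sg_mult T y z)" using assms(1) unfolding is_semigroup_def by blast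
    fix s t u assume h: "s \<in> sg_carrier T" "t \<in> sg_carrier T" "u \<in> sg_carrier T"
      "sg_mult T a s = sg_mult T a t"
    have "sg_mult T a (sg_mult T s u) = sg_mult T (sg_mult T a s) u"
      using assoc assms(2) h(1,3) by simp
    also have "\<dots> = sg_mult T (sg_mult T a t) u" using h(4) by simp
    also have "\<dots> = sg_mult T a (sg_mult T t u)"
      using assoc assms(2) h(2,3) by simp
    finally show "sg_mult T a (sg_mult T s u) = sg_mult T a (sg_mult T t u)" .
  qed
  have cl: "\<forall>x\<in>sg_carrier T. \<forall>y\<in>sg_carrier T. sg_mult T x y \<in> sg_carrier T"
    using assms(1) unfolding is_semigroup_def by blast
  show ?thesis unfolding rc_iff r_ann_def
  proof (intro conjI allI impI ballI)
    fix s t u assume "(s,t) \<in> {(s, t). s \<in> sg_carrier T \<and> t \<in> sg_carrier T \<and> sg_mult T a s = sg_mult T a t}"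
      "u \<in> sg_carrier T"
    then show "(sg_mult T s u, sg_mult T t u) \<in> {(s, t). s \<in> sg_carrier T \<and> t \<in> sg_carrier T \<and> sg_mult T a s = sg_mult T a t}"
      using comp[of s t u] cl by auto
  qed auto
qed

lemma fg_intro:
  assumes "is_semigroup T" "finite X" "X \<subseteq> sg_carrier T \<times> sg_carrier T" "X \<subseteq> \<rho>"
    "right_congruence T \<rho>"
    "\<And>\<rho>'. right_congruence T \<rho>' \<Longrightarrow> X \<subseteq> \<rho>' \<Longrightarrow> \<rho> \<subseteq> \<rho>'"
  shows "fin_gen_right_congruence T \<rho>"
proof -
  have "rcong_gen T X = \<rho>"
  proof
    show "rcong_gen T X \<subseteq> \<rho>" using rcg_least[OF assms(5,4)] .
    have "right_congruence T (rcong_gen T X)" using assms(1) rcg_rc[OF _ assms(3)] unfolding is_semigroup_def by blast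
    moreover have "X \<subseteq> rcong_gen T X" by (auto simp: rcong_gen_def)
    ultimately show "\<rho> \<subseteq> rcong_gen T X" by (rule assms(6))
  qed
  then show ?thesis using assms(2,3) unfolding fin_gen_right_congruence_def by blast
qed

lemma diag_fg:
  assumes "is_semigroup T" "e \<in> sg_carrier T" "\<forall>x\<in>sg_carrier T. sg_mult T e x = x"
  shows "fin_gen_right_congruence T (r_ann T e)"
proof (rule fg_intro[where X="{}"])
  show "right_congruence T (r_ann T e)" by (rule rann_rc[OF assms(1,2)])
  fix \<rho>' assume "right_congruence T \<rho>'"
  then have refl: "\<forall>x\<in>sg_carrier T. (x,x) \<in> \<rho>'" unfolding rc_iff by blast
  show "r_ann T e \<subseteq> \<rho>'"
  proof
    fix p assume "p \<in> r_ann T e"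
    then obtain s t where "p = (s,t)" "s \<in> sg_carrier T" "sg_mult T e s = sg_mult T e t" "t \<in> sg_carrier T"
      unfolding r_ann_def by blast
    then show "p \<in> \<rho>'" using refl assms(3) by auto
  qed
qed (simp_all add: assms(1))

section \<open>Adjoining an identity\<close>

definition ide :: "'a sgrp \<Rightarrow> 'a" where
  "ide M = (SOME e. e \<in> sg_carrier M \<and> (\<forall>x\<in>sg_carrier M. sg_mult M e x = x \<and> sg_mult M x e = x))"

definition one1 :: "'a sgrp \<Rightarrow> 'a option" where
  "one1 M = (if is_monoid_sg M then Some (ide M) else None)"

lemma ide_props:
  assumes "is_monoid_sg M"
  shows "ide M \<in> sg_carrier M" "\<And>x. x\<in>sg_carrier M \<Longrightarrow> sg_mult M (ide M) x = x \<and> sg_mult M x (ide M) = x"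
proof -
  have "\<exists>e. e \<in> sg_carrier M \<and> (\<forall>x\<in>sg_carrier M. sg_mult M e x = x \<and> sg_mult M x e = x)"
    using assms unfolding is_monoid_sg_def by blast
  from someI_ex[OF this] show "ide M \<in> sg_carrier M" "\<And>x. x\<in>sg_carrier M \<Longrightarrow> sg_mult M (ide M) x = x \<and> sg_mult M x (ide M) = x"
    unfolding ide_def by blast+
qed

lemma ide_unique:
  assumes "e \<in> sg_carrier M" "\<forall>x\<in>sg_carrier M. sg_mult M e x = x \<and> sg_mult M x e = x"
  shows "is_monoid_sg M" "ide M = e"
proof -
  show m: "is_monoid_sg M" using assms unfolding is_monoid_sg_def by blast
  have "sg_mult M e (ide M) = ide M" using assms ide_props[OF m] by blast
  moreover have "sg_mult M e (ide M) = e" using assms ide_props[OF m] by blast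
  ultimately show "ide M = e" by simp
qed

lemma ao_Some: "a \<in> sg_carrier M \<Longrightarrow> Some a \<in> sg_carrier (adjoin_one M)"
  by (auto simp: adjoin_one_def)

lemma ao_carrier: "p \<in> sg_carrier (adjoin_one M) \<Longrightarrow> p = None \<or> (\<exists>a\<in>sg_carrier M. p = Some a)"
  by (auto simp: adjoin_one_def split: if_splits)

lemma ao_Some_iff: "Some a \<in> sg_carrier (adjoin_one M) \<longleftrightarrow> a \<in> sg_carrier M"
  by (auto simp: adjoin_one_def)

lemma ao_None: "None \<in> sg_carrier (adjoin_one M) \<longleftrightarrow> \<not> is_monoid_sg M"
  by (auto simp: adjoin_one_def)

lemma ao_mult_Some: "sg_mult (adjoin_one M) (Some a) (Some b) = Some (sg_mult M a b)"
  by (auto simp: adjoin_one_def)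

lemma ao_mult_None:
  assumes "None \<in> sg_carrier (adjoin_one M)"
  shows "sg_mult (adjoin_one M) None p = p" "sg_mult (adjoin_one M) p None = p"
  using assms by (auto simp: adjoin_one_def split: option.splits)

lemma one1_props:
  shows "one1 M \<in> sg_carrier (adjoin_one M)"
    and "\<And>p. p \<in> sg_carrier (adjoin_one M) \<Longrightarrow>
           sg_mult (adjoin_one M) (one1 M) p = p \<and> sg_mult (adjoin_one M) p (one1 M) = p"
proof -
  show "one1 M \<in> sg_carrier (adjoin_one M)"
    using ide_props(1)[of M] by (auto simp: one1_def ao_Some_iff ao_None)
  fix p assume p: "p \<in> sg_carrier (adjoin_one M)"
  show "sg_mult (adjoin_one M) (one1 M) p = p \<and> sg_mult (adjoin_one M) p (one1 M) = p"
  proof (cases "is_monoid_sg M")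
    case True
    then obtain a where "a \<in> sg_carrier M" "p = Some a" using p ao_carrier ao_None by metis
    then show ?thesis using True ide_props[OF True] by (simp add: one1_def ao_mult_Some)
  next
    case False
    then show ?thesis by (simp add: one1_def ao_mult_None ao_None)
  qed
qed

lemma ao_semigroup:
  assumes "is_semigroup M"
  shows "is_semigroup (adjoin_one M)"
proof (cases "is_monoid_sg M")
  case True
  then show ?thesis using assms unfolding is_semigroup_def adjoin_one_def by auto
next
  case False
  have cl: "\<forall>x\<in>sg_carrier M. \<forall>y\<in>sg_carrier M. sg_mult M x y \<in> sg_carrier M"
    and as: "\<forall>x\<in>sg_carrier M. \<forall>y\<in>sg_carrier M. \<forall>z\<in>sg_carrier M.
        sg_mult M (sg_mult M x y) z = sg_mult M x (sg_mult M y z)" using assms unfolding is_semigroup_def by blast+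
  show ?thesis unfolding is_semigroup_def
  proof (intro conjI ballI)
    fix x y assume "x \<in> sg_carrier (adjoin_one M)" "y \<in> sg_carrier (adjoin_one M)"
    then show "sg_mult (adjoin_one M) x y \<in> sg_carrier (adjoin_one M)"
      using False cl by (auto simp: adjoin_one_def)
  next
    fix x y z assume "x \<in> sg_carrier (adjoin_one M)" "y \<in> sg_carrier (adjoin_one M)" "z \<in> sg_carrier (adjoin_one M)"
    then show "sg_mult (adjoin_one M) (sg_mult (adjoin_one M) x y) z =
        sg_mult (adjoin_one M) x (sg_mult (adjoin_one M) y z)"
      using False as by (auto simp: adjoin_one_def)
  qed
qed

definition goodw :: "'i set \<Rightarrow> ('i \<Rightarrow> 'a sgrp) \<Rightarrow> ('i \<times> 'a) list \<Rightarrow> bool" where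
  "goodw I S w \<longleftrightarrow> (\<forall>x\<in>set w. fst x \<in> I \<and> snd x \<in> sg_carrier (S (fst x))) \<and>
      successively (\<lambda>x y. fst x \<noteq> fst y) w"

lemma succ_nth: "successively P w \<longleftrightarrow> (\<forall>k. Suc k < length w \<longrightarrow> P (w!k) (w!Suc k))"
proof (induction P w rule: successively.induct)
  case (3 P x y xs)
  show ?case
    apply (simp only: successively.simps 3)
    by (auto simp: nth_Cons split: nat.splits)
qed auto

lemma fp_carrier_alt: "fp_carrier I S = {w. w \<noteq> [] \<and> goodw I S w}"
  unfolding fp_carrier_def goodw_def succ_nth[of "\<lambda>x y. fst x \<noteq> fst y"]
  by (auto simp: all_set_conv_all_nth)

lemma goodw_append: "goodw I S (u @ v) \<longleftrightarrow> goodw I S u \<and> goodw I S v \<and>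
   (u \<noteq> [] \<longrightarrow> v \<noteq> [] \<longrightarrow> fst (last u) \<noteq> fst (hd v))"
  by (auto simp: goodw_def successively_append_iff)

lemma goodw_Cons: "goodw I S (x # v) \<longleftrightarrow> fst x \<in> I \<and> snd x \<in> sg_carrier (S (fst x)) \<and> goodw I S v \<and>
   (v \<noteq> [] \<longrightarrow> fst x \<noteq> fst (hd v))"
  by (auto simp: goodw_def successively_Cons)

lemma goodw_Nil[simp]: "goodw I S []" by (simp add: goodw_def)

lemma fpm_Nil[simp]: "fp_mult S [] v = v" "fp_mult S u [] = u"
  by (auto simp: fp_mult_def)

lemma fpm_snoc_cons: "fp_mult S (u0 @ [(k,a)]) ((l,b) # v0) =
   (if k = l then u0 @ (k, sg_mult (S k) a b) # v0 else u0 @ (k,a) # (l,b) # v0)"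
  by (simp add: fp_mult_def)

lemma fpm_nonempty: "u \<noteq> [] \<Longrightarrow> fp_mult S u v \<noteq> []"
  by (auto simp: fp_mult_def)

lemma fpm_good:
  assumes SG: "\<forall>i\<in>I. is_semigroup (S i)" and gu: "goodw I S u" and gv: "goodw I S v"
  shows "goodw I S (fp_mult S u v)"
proof (cases "u = [] \<or> v = []")
  case True then show ?thesis using gu gv by auto
next
  case False
  then obtain u0 k a where u: "u = u0 @ [(k,a)]" by (metis rev_exhaust surj_pair)
  obtain l b v0 where v: "v = (l,b) # v0" using False by (metis list.exhaust surj_pair)
  have gu': "goodw I S u0" "k \<in> I" "a \<in> sg_carrier (S k)" "u0 \<noteq> [] \<longrightarrow> fst (last u0) \<noteq> k"
    using gu unfolding u goodw_append goodw_Cons by auto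
  have gv': "goodw I S v0" "l \<in> I" "b \<in> sg_carrier (S l)" "v0 \<noteq> [] \<longrightarrow> l \<noteq> fst (hd v0)"
    using gv unfolding v goodw_Cons by auto
  show ?thesis
  proof (cases "k = l")
    case True
    then have "sg_mult (S k) a b \<in> sg_carrier (S k)" using SG gu' gv' unfolding is_semigroup_def by blast
    then show ?thesis unfolding u v fpm_snoc_cons using True gu' gv'
      by (simp add: goodw_append goodw_Cons)
  next
    case False
    then show ?thesis unfolding u v fpm_snoc_cons using gu' gv'
      by (simp add: goodw_append goodw_Cons)
  qed
qed

lemma fpm_assoc:
  assumes SG: "\<forall>i\<in>I. is_semigroup (S i)" and gu: "goodw I S u" and gv: "goodw I S v" and gw: "goodw I S w"
  shows "fp_mult S (fp_mult S u v) w = fp_mult S u (fp_mult S v w)"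
proof (cases "u = [] \<or> v = [] \<or> w = []")
  case True then show ?thesis by auto
next
  case False
  then obtain u0 k a where u: "u = u0 @ [(k,a)]" by (metis rev_exhaust surj_pair)
  obtain l c w0 where w: "w = (l,c) # w0" using False by (metis list.exhaust surj_pair)
  obtain j b v1 where v: "v = (j,b) # v1" using False by (metis list.exhaust surj_pair)
  have ka: "k \<in> I" "a \<in> sg_carrier (S k)" using gu unfolding u goodw_append goodw_Cons by auto
  have lc: "l \<in> I" "c \<in> sg_carrier (S l)" using gw unfolding w goodw_Cons by auto
  have jb: "j \<in> I" "b \<in> sg_carrier (S j)" using gv unfolding v goodw_Cons by auto
  show ?thesis
  proof (cases "v1 = []")
    case True
    have as: "sg_mult (S j) (sg_mult (S j) a b) c = sg_mult (S j) a (sg_mult (S j) b c)"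
      if "k = j" "j = l" using that SG ka lc jb unfolding is_semigroup_def by blast
    show ?thesis unfolding u v w True using as
      by (simp add: fp_mult_def butlast_append)
  next
    case False
    then obtain v2 j' b' where v1: "v1 = v2 @ [(j',b')]" by (metis rev_exhaust surj_pair)
    show ?thesis unfolding u v w v1
      by (simp add: fp_mult_def butlast_append)
  qed
qed

lemma fp_semigroup:
  assumes SG: "\<forall>i\<in>I. is_semigroup (S i)"
  shows "is_semigroup (free_product I S)"
  unfolding is_semigroup_def free_product_def
  using fpm_good[OF SG] fpm_assoc[OF SG] by (simp add: fp_carrier_alt fpm_nonempty)

lemma transfer_down:
  fixes T :: "'t sgrp" and U :: "'u sgrp"
  assumes semT: "is_semigroup T" and semU: "is_semigroup U"
    and RT: "R \<subseteq> sg_carrier T" and projU: "\<forall>p\<in>R. proj p \<in> sg_carrier U"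
    and emb: "\<forall>u\<in>sg_carrier U. emb u \<in> R \<and> proj (emb u) = u"
    and F1: "\<forall>p\<in>R. \<forall>q\<in>R. sg_mult T p q \<in> R \<and> proj (sg_mult T p q) = sg_mult U (proj p) (proj q)"
    and F2: "\<forall>p\<in>sg_carrier T. \<forall>q\<in>sg_carrier T. sg_mult T p q \<in> R \<longrightarrow> p \<in> R \<and> q \<in> R"
    and XR: "X\<^sub>0 \<in> R" and Xp: "proj X\<^sub>0 = x"
    and e': "\<forall>u\<in>sg_carrier U. \<forall>v\<in>sg_carrier U. sg_mult U x u = sg_mult U x v \<longrightarrow>
              sg_mult T X\<^sub>0 (emb u) = sg_mult T X\<^sub>0 (emb v)"
    and fg: "fin_gen_right_congruence T (r_ann T X\<^sub>0)"
  shows "fin_gen_right_congruence U (r_ann U x)"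
proof -
  obtain X where X: "finite X" "X \<subseteq> sg_carrier T \<times> sg_carrier T" "rcong_gen T X = r_ann T X\<^sub>0"
    using fg unfolding fin_gen_right_congruence_def by blast
  define Y where "Y = (\<lambda>(p,q). (proj p, proj q)) ` (X \<inter> (R \<times> R))"
  have xU: "x \<in> sg_carrier U" using projU XR Xp by blast
  have X0T: "X\<^sub>0 \<in> sg_carrier T" using XR RT by blast
  have "X \<subseteq> rcong_gen T X" unfolding rcong_gen_def by blast
  then have Xsub: "X \<subseteq> r_ann T X\<^sub>0" using X(3) by simp
  show ?thesis
  proof (rule fg_intro[where X=Y])
    show "is_semigroup U" by (rule semU)
    show "finite Y" unfolding Y_def using X(1) by simp
    show "Y \<subseteq> sg_carrier U \<times> sg_carrier U" unfolding Y_def using projU by auto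
    show "right_congruence U (r_ann U x)" by (rule rann_rc[OF semU xU])
    show "Y \<subseteq> r_ann U x"
    proof
      fix y assume "y \<in> Y"
      then obtain p q where pq: "(p,q) \<in> X" "p \<in> R" "q \<in> R" "y = (proj p, proj q)" unfolding Y_def by auto
      then have "sg_mult T X\<^sub>0 p = sg_mult T X\<^sub>0 q" using Xsub by (auto simp: r_ann_def)
      then have "proj (sg_mult T X\<^sub>0 p) = proj (sg_mult T X\<^sub>0 q)" by simp
      then have "sg_mult U x (proj p) = sg_mult U x (proj q)" using F1 XR pq Xp by metis
      then show "y \<in> r_ann U x" using pq projU by (auto simp: r_ann_def)
    qed
  next
    fix \<rho> assume rho: "right_congruence U \<rho>" "Y \<subseteq> \<rho>"
    define \<sigma> where "\<sigma> = {(p,q). (p,q) \<in> r_ann T X\<^sub>0 \<and> (p \<in> R \<longrightarrow> q \<in> R \<longrightarrow> (proj p, proj q) \<in> \<rho>)}"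
    have rr: "\<forall>x\<in>sg_carrier U. (x,x)\<in>\<rho>" "\<forall>x y. (x,y)\<in>\<rho> \<longrightarrow> (y,x)\<in>\<rho>"
      "\<forall>x y z. (x,y)\<in>\<rho> \<longrightarrow> (y,z)\<in>\<rho> \<longrightarrow> (x,z)\<in>\<rho>"
      "\<forall>s t u. (s,t)\<in>\<rho> \<longrightarrow> u \<in> sg_carrier U \<longrightarrow> (sg_mult U s u, sg_mult U t u) \<in> \<rho>"
      using rho(1) unfolding rc_iff by blast+
    have rT: "right_congruence T (r_ann T X\<^sub>0)" by (rule rann_rc[OF semT X0T])
    have rT': "\<forall>x y z. (x,y)\<in>r_ann T X\<^sub>0 \<longrightarrow> (y,z)\<in>r_ann T X\<^sub>0 \<longrightarrow> (x,z)\<in>r_ann T X\<^sub>0"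
      "\<forall>x y. (x,y)\<in>r_ann T X\<^sub>0 \<longrightarrow> (y,x)\<in>r_ann T X\<^sub>0"
      "\<forall>s t u. (s,t)\<in>r_ann T X\<^sub>0 \<longrightarrow> u \<in> sg_carrier T \<longrightarrow> (sg_mult T s u, sg_mult T t u) \<in> r_ann T X\<^sub>0"
      using rT unfolding rc_iff by blast+
    have mid: "q \<in> R" if "(p,q) \<in> r_ann T X\<^sub>0" "p \<in> R" for p q
    proof -
      have "sg_mult T X\<^sub>0 p \<in> R" using F1 XR that(2) by blast
      moreover have "sg_mult T X\<^sub>0 p = sg_mult T X\<^sub>0 q" "q \<in> sg_carrier T"
        using that(1) by (auto simp: r_ann_def)
      ultimately show "q \<in> R" using F2 X0T by metis
    qed
    have "right_congruence T \<sigma>" unfolding rc_iff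
    proof (intro conjI allI impI ballI)
      show "\<sigma> \<subseteq> sg_carrier T \<times> sg_carrier T" unfolding \<sigma>_def r_ann_def by auto
    next
      fix p assume "p \<in> sg_carrier T" then show "(p,p) \<in> \<sigma>"
        unfolding \<sigma>_def r_ann_def using rr(1) projU by auto
    next
      fix p q assume "(p,q) \<in> \<sigma>" then show "(q,p) \<in> \<sigma>"
        unfolding \<sigma>_def using rT'(2) rr(2) by blast
    next
      fix p q r assume a: "(p,q) \<in> \<sigma>" "(q,r) \<in> \<sigma>"
      have pr: "(p,r) \<in> r_ann T X\<^sub>0" using a rT'(1) unfolding \<sigma>_def by blast
      have "p \<in> R \<longrightarrow> r \<in> R \<longrightarrow> (proj p, proj r) \<in> \<rho>"
      proof (intro impI)
        assume "p \<in> R" "r \<in> R"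
        moreover have "q \<in> R" using mid a \<open>p \<in> R\<close> unfolding \<sigma>_def by blast
        ultimately show "(proj p, proj r) \<in> \<rho>" using a rr(3) unfolding \<sigma>_def by blast
      qed
      then show "(p,r) \<in> \<sigma>" unfolding \<sigma>_def using pr by simp
    next
      fix p q u assume a: "(p,q) \<in> \<sigma>" "u \<in> sg_carrier T"
      have pq: "(p,q) \<in> r_ann T X\<^sub>0" using a unfolding \<sigma>_def by blast
      then have pqT: "p \<in> sg_carrier T" "q \<in> sg_carrier T" by (auto simp: r_ann_def)
      have m1: "(sg_mult T p u, sg_mult T q u) \<in> r_ann T X\<^sub>0" using rT'(3) pq a(2) by blast
      have "sg_mult T p u \<in> R \<longrightarrow> sg_mult T q u \<in> R \<longrightarrow> (proj (sg_mult T p u), proj (sg_mult T q u)) \<in> \<rho>"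
      proof (intro impI)
        assume h: "sg_mult T p u \<in> R" "sg_mult T q u \<in> R"
        then have "p \<in> R" "u \<in> R" "q \<in> R" using F2 pqT a(2) by blast+
        then have "(proj p, proj q) \<in> \<rho>" using a unfolding \<sigma>_def by blast
        then have "(sg_mult U (proj p) (proj u), sg_mult U (proj q) (proj u)) \<in> \<rho>"
          using rr(4) projU \<open>u \<in> R\<close> by blast
        then show "(proj (sg_mult T p u), proj (sg_mult T q u)) \<in> \<rho>"
          using F1 \<open>p \<in> R\<close> \<open>u \<in> R\<close> \<open>q \<in> R\<close> by metis
      qed
      then show "(sg_mult T p u, sg_mult T q u) \<in> \<sigma>" unfolding \<sigma>_def using m1 by simp
    qed
    moreover have "X \<subseteq> \<sigma>"
    proof
      fix y assume y: "y \<in> X"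
      then obtain p q where pq: "y = (p,q)" by (cases y)
      have "(p,q) \<in> r_ann T X\<^sub>0" using Xsub y pq by blast
      moreover have "p \<in> R \<longrightarrow> q \<in> R \<longrightarrow> (proj p, proj q) \<in> \<rho>"
        using rho(2) y pq unfolding Y_def by blast
      ultimately show "y \<in> \<sigma>" unfolding \<sigma>_def pq by blast
    qed
    ultimately have "r_ann T X\<^sub>0 \<subseteq> \<sigma>" using rcg_least[of T \<sigma> X] X(3) by simp
    show "r_ann U x \<subseteq> \<rho>"
    proof
      fix y assume y: "y \<in> r_ann U x"
      then obtain u v where uv: "y = (u,v)" "u \<in> sg_carrier U" "v \<in> sg_carrier U" "sg_mult U x u = sg_mult U x v"
        unfolding r_ann_def by blast
      have "emb u \<in> R" "emb v \<in> R" "proj (emb u) = u" "proj (emb v) = v" using emb uv by blast+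
      moreover have "(emb u, emb v) \<in> r_ann T X\<^sub>0"
        using e' uv \<open>emb u \<in> R\<close> \<open>emb v \<in> R\<close> RT unfolding r_ann_def by blast
      ultimately have "(emb u, emb v) \<in> \<sigma>" using \<open>r_ann T X\<^sub>0 \<subseteq> \<sigma>\<close> by blast
      then show "y \<in> \<rho>" unfolding \<sigma>_def using \<open>emb u \<in> R\<close> \<open>emb v \<in> R\<close> \<open>proj (emb u) = u\<close> \<open>proj (emb v) = v\<close> uv(1) by auto
    qed
  qed
qed

lemma transfer_up:
  fixes T :: "'t sgrp" and U :: "'u sgrp"
  assumes semT: "is_semigroup T" and semU: "is_semigroup U"
    and RT: "R \<subseteq> sg_carrier T" and projU: "\<forall>p\<in>R. proj p \<in> sg_carrier U"
    and emb: "\<forall>u\<in>sg_carrier U. emb u \<in> R \<and> proj (emb u) = u"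
    and embhom: "\<forall>u\<in>sg_carrier U. \<forall>v\<in>sg_carrier U. emb (sg_mult U u v) = sg_mult T (emb u) (emb v)"
    and aT: "a \<in> sg_carrier T" and xU: "x \<in> sg_carrier U"
    and hh: "\<forall>s\<in>sg_carrier T. hh s \<in> R \<and> tt s \<in> sg_carrier T \<and> s = sg_mult T (hh s) (tt s)"
    and d: "\<forall>s\<in>sg_carrier T. \<forall>t\<in>sg_carrier T. sg_mult T a s = sg_mult T a t \<longrightarrow>
              tt s = tt t \<and> sg_mult U x (proj (hh s)) = sg_mult U x (proj (hh t))"
    and e: "\<forall>u\<in>sg_carrier U. \<forall>v\<in>sg_carrier U. sg_mult U x u = sg_mult U x v \<longrightarrow>
              sg_mult T a (emb u) = sg_mult T a (emb v)"
    and f: "\<forall>p\<in>R. p = emb (proj p) \<or> p = oo"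
    and f2: "oo \<in> R \<longrightarrow> sg_mult T a oo = sg_mult T a (emb (proj oo))"
    and fg: "fin_gen_right_congruence U (r_ann U x)"
  shows "fin_gen_right_congruence T (r_ann T a)"
proof -
  obtain Y where Y: "finite Y" "Y \<subseteq> sg_carrier U \<times> sg_carrier U" "rcong_gen U Y = r_ann U x"
    using fg unfolding fin_gen_right_congruence_def by blast
  define G where "G = (\<lambda>(u,v). (emb u, emb v)) ` Y \<union> {(p, emb (proj p)) | p. p \<in> R \<and> p = oo}"
  have "Y \<subseteq> rcong_gen U Y" unfolding rcong_gen_def by blast
  then have Ysub: "Y \<subseteq> r_ann U x" using Y(3) by simp
  have embT: "\<forall>u\<in>sg_carrier U. emb u \<in> sg_carrier T" using emb RT by blast
  have Gfin: "finite G"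
  proof -
    have "{(p, emb (proj p)) | p. p \<in> R \<and> p = oo} \<subseteq> {(oo, emb (proj oo))}" by auto
    then have "finite {(p, emb (proj p)) | p. p \<in> R \<and> p = oo}" by (rule finite_subset) simp
    then show ?thesis unfolding G_def using Y(1) by simp
  qed
  show ?thesis
  proof (rule fg_intro[where X=G])
    show "is_semigroup T" by (rule semT)
    show "finite G" by (rule Gfin)
    show "G \<subseteq> sg_carrier T \<times> sg_carrier T" unfolding G_def using Y(2) embT RT projU by auto
    show "right_congruence T (r_ann T a)" by (rule rann_rc[OF semT aT])
    show "G \<subseteq> r_ann T a"
    proof
      fix g assume "g \<in> G"
      then have "g \<in> (\<lambda>(u,v). (emb u, emb v)) ` Y \<or> (oo \<in> R \<and> g = (oo, emb (proj oo)))"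
        unfolding G_def Un_iff mem_Collect_eq by blast
      then show "g \<in> r_ann T a"
      proof
        assume "g \<in> (\<lambda>(u,v). (emb u, emb v)) ` Y"
        then obtain y where y: "y \<in> Y" "g = (\<lambda>(u,v). (emb u, emb v)) y" by (rule imageE)
        obtain u v where uv: "y = (u,v)" by (cases y)
        have "(u,v) \<in> r_ann U x" using Ysub y(1) uv by blast
        then have h: "u \<in> sg_carrier U" "v \<in> sg_carrier U" "sg_mult U x u = sg_mult U x v"
          unfolding r_ann_def by blast+
        have "sg_mult T a (emb u) = sg_mult T a (emb v)" using e h by blast
        moreover have "emb u \<in> sg_carrier T" "emb v \<in> sg_carrier T" using embT h by blast+
        moreover have "g = (emb u, emb v)" using y(2) uv by simp
        ultimately show ?thesis unfolding r_ann_def by simp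
      next
        assume B: "oo \<in> R \<and> g = (oo, emb (proj oo))"
        then have "oo \<in> sg_carrier T" "emb (proj oo) \<in> sg_carrier T" using RT projU embT by blast+
        moreover have "sg_mult T a oo = sg_mult T a (emb (proj oo))" using f2 B by blast
        ultimately show ?thesis using B unfolding r_ann_def by simp
      qed
    qed
  next
    fix \<rho> assume rho: "right_congruence T \<rho>" "G \<subseteq> \<rho>"
    have rr: "\<forall>x\<in>sg_carrier T. (x,x)\<in>\<rho>" "\<forall>x y. (x,y)\<in>\<rho> \<longrightarrow> (y,x)\<in>\<rho>"
      "\<forall>x y z. (x,y)\<in>\<rho> \<longrightarrow> (y,z)\<in>\<rho> \<longrightarrow> (x,z)\<in>\<rho>"
      "\<forall>s t u. (s,t)\<in>\<rho> \<longrightarrow> u \<in> sg_carrier T \<longrightarrow> (sg_mult T s u, sg_mult T t u) \<in> \<rho>"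
      using rho(1) unfolding rc_iff by blast+
    define \<pi> where "\<pi> = {(u,v). u \<in> sg_carrier U \<and> v \<in> sg_carrier U \<and> (emb u, emb v) \<in> \<rho>}"
    have "right_congruence U \<pi>" unfolding rc_iff
    proof (intro conjI allI impI ballI)
      show "\<pi> \<subseteq> sg_carrier U \<times> sg_carrier U" unfolding \<pi>_def by auto
    next
      fix u assume "u \<in> sg_carrier U" then show "(u,u) \<in> \<pi>" unfolding \<pi>_def using rr(1) embT by auto
    next
      fix u v assume "(u,v) \<in> \<pi>" then show "(v,u) \<in> \<pi>" unfolding \<pi>_def using rr(2) by auto
    next
      fix u v w assume "(u,v) \<in> \<pi>" "(v,w) \<in> \<pi>" then show "(u,w) \<in> \<pi>" unfolding \<pi>_def using rr(3) by auto
    next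
      fix u v w assume a: "(u,v) \<in> \<pi>" "w \<in> sg_carrier U"
      have cl: "\<forall>x\<in>sg_carrier U. \<forall>y\<in>sg_carrier U. sg_mult U x y \<in> sg_carrier U"
        using semU unfolding is_semigroup_def by blast
      have uv: "u \<in> sg_carrier U" "v \<in> sg_carrier U" "(emb u, emb v) \<in> \<rho>" using a unfolding \<pi>_def by auto
      have "(sg_mult T (emb u) (emb w), sg_mult T (emb v) (emb w)) \<in> \<rho>"
        using rr(4)[rule_format, OF uv(3) embT[rule_format, OF a(2)]] .
      then have "(emb (sg_mult U u w), emb (sg_mult U v w)) \<in> \<rho>" using embhom uv a(2) by simp
      then show "(sg_mult U u w, sg_mult U v w) \<in> \<pi>" unfolding \<pi>_def using cl uv a(2) by auto
    qed
    moreover have "Y \<subseteq> \<pi>"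
    proof
      fix y assume y: "y \<in> Y"
      then obtain u v where uv: "y = (u,v)" by (cases y)
      have "(emb u, emb v) \<in> (\<lambda>(u,v). (emb u, emb v)) ` Y"
        by (rule rev_image_eqI[of "(u,v)"]) (use y uv in auto)
      then have "(emb u, emb v) \<in> \<rho>" using rho(2) unfolding G_def by blast
      then show "y \<in> \<pi>" unfolding \<pi>_def using Y(2) y uv by auto
    qed
    ultimately have piU: "r_ann U x \<subseteq> \<pi>" using rcg_least[of U \<pi> Y] Y(3) by simp
    have toemb: "(p, emb (proj p)) \<in> \<rho>" if "p \<in> R" for p
    proof (cases "p = emb (proj p)")
      case True then show ?thesis using rr(1) RT that by (metis subsetD)
    next
      case False
      then have "p = oo" using f that by blast
      then have "(p, emb (proj p)) \<in> G" unfolding G_def using that by blast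
      then show ?thesis using rho(2) by blast
    qed
    show "r_ann T a \<subseteq> \<rho>"
    proof
      fix y assume "y \<in> r_ann T a"
      then obtain s t where st: "y = (s,t)" "s \<in> sg_carrier T" "t \<in> sg_carrier T" "sg_mult T a s = sg_mult T a t"
        unfolding r_ann_def by blast
      have hs: "hh s \<in> R" "tt s \<in> sg_carrier T" "s = sg_mult T (hh s) (tt s)" using hh st(2) by blast+
      have ht: "hh t \<in> R" "tt t \<in> sg_carrier T" "t = sg_mult T (hh t) (tt t)" using hh st(3) by blast+
      have eq: "tt s = tt t" "sg_mult U x (proj (hh s)) = sg_mult U x (proj (hh t))" using d st by blast+
      have "(proj (hh s), proj (hh t)) \<in> r_ann U x"
        unfolding r_ann_def using eq(2) projU hs(1) ht(1) by auto
      then have "(emb (proj (hh s)), emb (proj (hh t))) \<in> \<rho>" using piU unfolding \<pi>_def by blast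
      moreover have "(hh s, emb (proj (hh s))) \<in> \<rho>" using toemb hs(1) by blast
      moreover have "(emb (proj (hh t)), hh t) \<in> \<rho>" using toemb ht(1) rr(2) by blast
      ultimately have "(hh s, hh t) \<in> \<rho>" using rr(3) by blast
      then have "(sg_mult T (hh s) (tt s), sg_mult T (hh t) (tt s)) \<in> \<rho>" using rr(4) hs(2) by blast
      then have "(s, sg_mult T (hh t) (tt s)) \<in> \<rho>" by (simp only: hs(3)[symmetric])
      then have "(s, sg_mult T (hh t) (tt t)) \<in> \<rho>" by (simp only: eq(1))
      then show "y \<in> \<rho>" by (simp only: ht(3)[symmetric] st(1))
    qed
  qed
qed

locale fpc =
  fixes I :: "'i set" and S :: "'i \<Rightarrow> 'a sgrp"
  assumes SG: "\<forall>i\<in>I. is_semigroup (S i)"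
begin

abbreviation "F \<equiv> free_product I S"
abbreviation "T \<equiv> adjoin_one F"

definition W :: "('i \<times> 'a) list option \<Rightarrow> ('i \<times> 'a) list" where
  "W p = (case p of None \<Rightarrow> [] | Some w \<Rightarrow> w)"

definition Winv :: "('i \<times> 'a) list \<Rightarrow> ('i \<times> 'a) list option" where
  "Winv w = (if w = [] then one1 F else Some w)"

lemma F_sg: "is_semigroup F" using fp_semigroup[OF SG] .
lemma T_sg: "is_semigroup T" using ao_semigroup[OF F_sg] .
lemma CF: "sg_carrier F = {w. w \<noteq> [] \<and> goodw I S w}" by (simp add: free_product_def fp_carrier_alt)
lemma mF: "sg_mult F = fp_mult S" by (simp add: free_product_def)

lemma T_elem:
  assumes "p \<in> sg_carrier T"
  shows "goodw I S (W p)" "W p = [] \<longleftrightarrow> p = None"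
proof -
  have "goodw I S (W p) \<and> (W p = [] \<longleftrightarrow> p = None)"
  proof (cases p)
    case None then show ?thesis by (simp add: W_def)
  next
    case (Some a)
    then have "a \<in> sg_carrier F" using assms ao_Some_iff by metis
    then have "a \<noteq> []" "goodw I S a" unfolding CF by simp_all
    then show ?thesis using Some by (simp add: W_def)
  qed
  then show "goodw I S (W p)" "W p = [] \<longleftrightarrow> p = None" by simp_all
qed

lemma Some_T: "w \<noteq> [] \<Longrightarrow> goodw I S w \<Longrightarrow> Some w \<in> sg_carrier T"
  using ao_Some[of w F] CF by auto

lemma T_Some: "p \<in> sg_carrier T \<Longrightarrow> W p \<noteq> [] \<Longrightarrow> p = Some (W p)"
  by (cases p) (auto simp: W_def)

lemma None_T: "None \<in> sg_carrier T \<Longrightarrow> one1 F = None"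
  using ao_None[of F] by (simp add: one1_def)

lemma None_mult:
  assumes "None \<in> sg_carrier T"
  shows "sg_mult T None p = p" "sg_mult T p None = p"
  using ao_mult_None[OF assms] by auto

lemma W_mult:
  assumes p: "p \<in> sg_carrier T" and q: "q \<in> sg_carrier T"
  shows "W (sg_mult T p q) = fp_mult S (W p) (W q)"
proof (cases p)
  case None
  then show ?thesis using None_mult(1)[of q] p by (simp add: W_def)
next
  case (Some a)
  show ?thesis
  proof (cases q)
    case None
    then show ?thesis using None_mult(2)[of p] q by (simp add: W_def)
  next
    case (Some b)
    then show ?thesis using \<open>p = Some a\<close> by (simp add: W_def ao_mult_Some mF)
  qed
qed

lemma one1F: "one1 F \<in> sg_carrier T"
  "\<And>p. p \<in> sg_carrier T \<Longrightarrow> sg_mult T (one1 F) p = p \<and> sg_mult T p (one1 F) = p"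
  using one1_props[where M=F] by auto

lemma Winv_T: "goodw I S w \<Longrightarrow> Winv w \<in> sg_carrier T"
  using one1F(1) Some_T by (auto simp: Winv_def)

lemma Winv_W: "p \<in> sg_carrier T \<Longrightarrow> Winv (W p) = p"
proof (cases p)
  case None
  assume "p \<in> sg_carrier T"
  then show ?thesis using None None_T by (simp add: Winv_def W_def)
next
  case (Some a)
  assume "p \<in> sg_carrier T"
  then have "W p \<noteq> []" using T_elem(2) Some by blast
  then show ?thesis using Some by (simp add: Winv_def W_def)
qed

lemma Winv_mult:
  assumes g1: "goodw I S w1" and g2: "goodw I S w2"
  shows "sg_mult T (Winv w1) (Winv w2) = Winv (fp_mult S w1 w2)"
proof (cases "w1 = []")
  case True
  then show ?thesis using one1F(2)[OF Winv_T[OF g2]] by (simp add: Winv_def)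
next
  case False
  show ?thesis
  proof (cases "w2 = []")
    case True
    then show ?thesis using one1F(2)[OF Winv_T[OF g1]] by (simp add: Winv_def)
  next
    case False
    then show ?thesis using \<open>w1 \<noteq> []\<close> fpm_nonempty[of w1 S w2]
      by (simp add: Winv_def ao_mult_Some mF)
  qed
qed

lemma F_monoid:
  assumes mon: "is_monoid_sg F" and i: "i \<in> I" and s: "s \<in> sg_carrier (S i)"
  shows "is_monoid_sg (S i) \<and> ide F = [(i, ide (S i))]"
proof -
  let ?E = "ide F"
  have E: "?E \<in> sg_carrier F" "\<And>w. w \<in> sg_carrier F \<Longrightarrow> fp_mult S ?E w = w \<and> fp_mult S w ?E = w"
    using ide_props[OF mon] mF by auto
  have let_in: "[(i,t)] \<in> sg_carrier F" if "t \<in> sg_carrier (S i)" for t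
    using that i by (simp add: CF goodw_Cons)
  have Eg: "?E \<noteq> []" "goodw I S ?E" using E(1) CF by auto
  then obtain E0 k a where E0: "?E = E0 @ [(k,a)]" by (metis rev_exhaust surj_pair)
  have "fp_mult S (E0 @ [(k,a)]) ((i,s) # []) = [(i,s)]" using E(2)[OF let_in[OF s]] E0 by simp
  then have "(if k = i then E0 @ [(k, sg_mult (S k) a s)] else E0 @ [(k,a),(i,s)]) = [(i,s)]"
    unfolding fpm_snoc_cons by simp
  then have ki: "k = i" "E0 = []" by (auto split: if_splits simp: append_eq_Cons_conv)
  then have Ei: "?E = [(i,a)]" using E0 by simp
  have aC: "a \<in> sg_carrier (S i)" using Eg(2) Ei by (simp add: goodw_Cons)
  have idt: "sg_mult (S i) a t = t \<and> sg_mult (S i) t a = t" if "t \<in> sg_carrier (S i)" for t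
  proof -
    have "fp_mult S [(i,a)] [(i,t)] = [(i,t)]" "fp_mult S [(i,t)] [(i,a)] = [(i,t)]"
      using E(2)[OF let_in[OF that]] Ei by auto
    then show ?thesis by (simp add: fp_mult_def)
  qed
  have "is_monoid_sg (S i)" "ide (S i) = a" using ide_unique[of a "S i"] aC idt by auto
  then show ?thesis using Ei by simp
qed

end

locale fpi = fpc I S for I :: "'i set" and S :: "'i \<Rightarrow> 'a sgrp" +
  fixes i :: 'i and x :: 'a
  assumes iI: "i \<in> I" and xC: "x \<in> sg_carrier (S i)"
begin

abbreviation "U \<equiv> adjoin_one (S i)"

definition emb :: "'a option \<Rightarrow> ('i \<times> 'a) list option" where
  "emb u = (case u of None \<Rightarrow> None | Some s \<Rightarrow> Some [(i,s)])"

definition R :: "('i \<times> 'a) list option set" where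
  "R = {p \<in> sg_carrier T. W p = [] \<or> (\<exists>s\<in>sg_carrier (S i). W p = [(i,s)])}"

definition proj :: "('i \<times> 'a) list option \<Rightarrow> 'a option" where
  "proj p = (case W p of [] \<Rightarrow> one1 (S i) | y # _ \<Rightarrow> Some (snd y))"

lemma Si_sg: "is_semigroup (S i)" using SG iI by blast
lemma U_sg: "is_semigroup U" using ao_semigroup[OF Si_sg] .

lemma letter_T: "s \<in> sg_carrier (S i) \<Longrightarrow> Some [(i,s)] \<in> sg_carrier T"
  using Some_T iI by (simp add: goodw_Cons)

lemma K2: "None \<in> sg_carrier U \<Longrightarrow> None \<in> sg_carrier T"
proof -
  assume "None \<in> sg_carrier U"
  then have "\<not> is_monoid_sg (S i)" using ao_None by blast
  then have "\<not> is_monoid_sg F" using F_monoid[OF _ iI xC] by blast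
  then show "None \<in> sg_carrier T" using ao_None by blast
qed

lemma oneF: "one1 F \<in> R" "proj (one1 F) = one1 (S i)"
proof -
  have "one1 F \<in> R \<and> proj (one1 F) = one1 (S i)"
  proof (cases "is_monoid_sg F")
    case True
    then have m: "is_monoid_sg (S i)" "ide F = [(i, ide (S i))]" using F_monoid[OF _ iI xC] by auto
    have "ide (S i) \<in> sg_carrier (S i)" using ide_props(1)[OF m(1)] .
    then show ?thesis using True m one1F(1) by (auto simp: R_def proj_def one1_def W_def)
  next
    case False
    then show ?thesis using one1F(1) by (auto simp: R_def proj_def one1_def W_def)
  qed
  then show "one1 F \<in> R" "proj (one1 F) = one1 (S i)" by auto
qed

lemma R_T: "R \<subseteq> sg_carrier T" by (auto simp: R_def)

lemma proj_U: "p \<in> R \<Longrightarrow> proj p \<in> sg_carrier U"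
  using one1_props(1)[of "S i"] ao_Some by (auto simp: R_def proj_def)

lemma emb_R: "u \<in> sg_carrier U \<Longrightarrow> emb u \<in> R \<and> proj (emb u) = u"
proof -
  assume u: "u \<in> sg_carrier U"
  show ?thesis
  proof (cases u)
    case None
    then have "None \<in> sg_carrier T" "\<not> is_monoid_sg (S i)" using K2 u ao_None by auto
    then show ?thesis using None by (auto simp: emb_def R_def W_def proj_def one1_def)
  next
    case (Some s)
    then have "s \<in> sg_carrier (S i)" using u ao_Some_iff by metis
    then show ?thesis using Some letter_T by (auto simp: emb_def R_def W_def proj_def)
  qed
qed

lemma emb_hom:
  assumes u: "u \<in> sg_carrier U" and v: "v \<in> sg_carrier U"
  shows "emb (sg_mult U u v) = sg_mult T (emb u) (emb v)"
proof (cases u)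
  case None
  then have "None \<in> sg_carrier T" using K2 u by simp
  then show ?thesis using None ao_mult_None(1)[of "S i" v] u None_mult(1) by (simp add: emb_def)
next
  case (Some s)
  show ?thesis
  proof (cases v)
    case None
    then have "None \<in> sg_carrier T" using K2 v by simp
    then show ?thesis using None ao_mult_None(2)[of "S i" u] v None_mult(2) by (simp add: emb_def)
  next
    case (Some t)
    then show ?thesis using \<open>u = Some s\<close> by (simp add: emb_def ao_mult_Some mF fp_mult_def)
  qed
qed

lemma R_None: "p \<in> R \<Longrightarrow> W p = [] \<Longrightarrow> p = None \<and> None \<in> sg_carrier T"
  using T_elem(2) by (auto simp: R_def)

lemma R_letter: "p \<in> R \<Longrightarrow> W p \<noteq> [] \<Longrightarrow> \<exists>s\<in>sg_carrier (S i). p = Some [(i,s)]"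
proof -
  assume p: "p \<in> R" and ne: "W p \<noteq> []"
  then obtain s where s: "s \<in> sg_carrier (S i)" "W p = [(i,s)]" unfolding R_def by blast
  have "p = Some (W p)" using T_Some p ne R_T by blast
  then show ?thesis using s by auto
qed

lemma F1:
  assumes p: "p \<in> R" and q: "q \<in> R"
  shows "sg_mult T p q \<in> R \<and> proj (sg_mult T p q) = sg_mult U (proj p) (proj q)"
proof (cases "W p = []")
  case True
  then have "p = None" "None \<in> sg_carrier T" using R_None p by auto
  moreover have "proj p = one1 (S i)" using True by (simp add: proj_def)
  ultimately show ?thesis using q None_mult(1) one1_props(2)[OF proj_U[OF q]] by simp
next
  case False
  then obtain s where s: "s \<in> sg_carrier (S i)" "p = Some [(i,s)]" using R_letter p by blast
  show ?thesis
  proof (cases "W q = []")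
    case True
    then have "q = None" "None \<in> sg_carrier T" using R_None q by auto
    moreover have "proj q = one1 (S i)" using True by (simp add: proj_def)
    ultimately show ?thesis using p None_mult(2) one1_props(2)[OF proj_U[OF p]] by simp
  next
    case False
    then obtain t where t: "t \<in> sg_carrier (S i)" "q = Some [(i,t)]" using R_letter q by blast
    have st: "sg_mult (S i) s t \<in> sg_carrier (S i)" using Si_sg s t unfolding is_semigroup_def by blast
    have "sg_mult T p q = Some [(i, sg_mult (S i) s t)]" using s t by (simp add: ao_mult_Some mF fp_mult_def)
    then show ?thesis using st letter_T s t by (simp add: R_def W_def proj_def ao_mult_Some)
  qed
qed

lemma F2:
  assumes p: "p \<in> sg_carrier T" and q: "q \<in> sg_carrier T" and pq: "sg_mult T p q \<in> R"
  shows "p \<in> R \<and> q \<in> R"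
proof (cases "W p = []")
  case True
  then have "p = None" "None \<in> sg_carrier T" using T_elem(2) p by auto
  then show ?thesis using pq None_mult(1) by (auto simp: R_def W_def)
next
  case Fp: False
  show ?thesis
  proof (cases "W q = []")
    case True
    then have "q = None" "None \<in> sg_carrier T" using T_elem(2) q by auto
    then show ?thesis using pq None_mult(2) by (auto simp: R_def W_def)
  next
    case False
    obtain p0 k a where pw: "W p = p0 @ [(k,a)]" using Fp by (metis rev_exhaust surj_pair)
    obtain l b q0 where qw: "W q = (l,b) # q0" using False by (metis list.exhaust surj_pair)
    have ne: "W (sg_mult T p q) \<noteq> []" unfolding W_mult[OF p q] using fpm_nonempty[OF Fp] .
    then obtain c where "W (sg_mult T p q) = [(i,c)]" using pq by (auto simp: R_def)
    then have "fp_mult S (W p) (W q) = [(i,c)]" unfolding W_mult[OF p q] .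
    then have "(if k = l then p0 @ (k, sg_mult (S k) a b) # q0 else p0 @ (k,a) # (l,b) # q0) = [(i,c)]"
      unfolding pw qw fpm_snoc_cons .
    then have kl: "k = l" "p0 = []" "q0 = []" "k = i" by (auto split: if_splits simp: append_eq_Cons_conv)
    have "goodw I S (W p)" "goodw I S (W q)" using T_elem p q by auto
    then have "a \<in> sg_carrier (S i)" "b \<in> sg_carrier (S i)" using pw qw kl by (auto simp: goodw_Cons)
    moreover have "W p = [(i,a)]" "W q = [(i,b)]" using pw qw kl by auto
    ultimately show ?thesis using p q unfolding R_def by blast
  qed
qed

lemma R_cases: "p \<in> R \<Longrightarrow> p = emb (proj p) \<or> p = one1 F"
proof -
  assume p: "p \<in> R"
  show ?thesis
  proof (cases "W p = []")
    case True
    then show ?thesis using R_None[OF p] None_T by auto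
  next
    case False
    then obtain s where "p = Some [(i,s)]" using R_letter p by blast
    then show ?thesis by (simp add: emb_def proj_def W_def)
  qed
qed

lemma Lx: "Some [(i,x)] \<in> R" "proj (Some [(i,x)]) = Some x" "emb (Some x) = Some [(i,x)]"
  "Some x \<in> sg_carrier U"
  using letter_T[OF xC] xC ao_Some by (auto simp: R_def W_def proj_def emb_def)

lemma down_i:
  assumes "fin_gen_right_congruence T (r_ann T (Some [(i,x)]))"
  shows "fin_gen_right_congruence U (r_ann U (Some x))"
proof (rule transfer_down[where R=R and proj=proj and emb=emb and X\<^sub>0="Some [(i,x)]"])
  show "is_semigroup T" by (rule T_sg)
  show "is_semigroup U" by (rule U_sg)
  show "R \<subseteq> sg_carrier T" by (rule R_T)
  show "\<forall>p\<in>R. proj p \<in> sg_carrier U" using proj_U by blast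
  show "\<forall>u\<in>sg_carrier U. emb u \<in> R \<and> proj (emb u) = u" using emb_R by blast
  show "\<forall>p\<in>R. \<forall>q\<in>R. sg_mult T p q \<in> R \<and> proj (sg_mult T p q) = sg_mult U (proj p) (proj q)"
    using F1 by blast
  show "\<forall>p\<in>sg_carrier T. \<forall>q\<in>sg_carrier T. sg_mult T p q \<in> R \<longrightarrow> p \<in> R \<and> q \<in> R"
    using F2 by blast
  show "Some [(i,x)] \<in> R" "proj (Some [(i,x)]) = Some x" using Lx by auto
  show "\<forall>u\<in>sg_carrier U. \<forall>v\<in>sg_carrier U. sg_mult U (Some x) u = sg_mult U (Some x) v \<longrightarrow>
      sg_mult T (Some [(i,x)]) (emb u) = sg_mult T (Some [(i,x)]) (emb v)"
  proof (intro ballI impI)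
    fix u v assume u: "u \<in> sg_carrier U" and v: "v \<in> sg_carrier U"
      and eq: "sg_mult U (Some x) u = sg_mult U (Some x) v"
    have "sg_mult T (Some [(i,x)]) (emb u) = emb (sg_mult U (Some x) u)"
      using emb_hom[OF Lx(4) u] Lx(3) by simp
    also have "\<dots> = emb (sg_mult U (Some x) v)" using eq by simp
    also have "\<dots> = sg_mult T (Some [(i,x)]) (emb v)"
      using emb_hom[OF Lx(4) v] Lx(3) by simp
    finally show "sg_mult T (Some [(i,x)]) (emb u) = sg_mult T (Some [(i,x)]) (emb v)" .
  qed
  show "fin_gen_right_congruence T (r_ann T (Some [(i,x)]))" by (rule assms)
qed

end

context fpi
begin

lemma up_i:
  assumes aT: "a \<in> sg_carrier T" and aw: "W a = a0 @ [(i,x)]"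
    and fg: "fin_gen_right_congruence U (r_ann U (Some x))"
  shows "fin_gen_right_congruence T (r_ann T a)"
proof -
  define hs :: "('i \<times> 'a) list \<Rightarrow> ('i \<times> 'a) list \<times> ('i \<times> 'a) list"
    where "hs w = (if w \<noteq> [] \<and> fst (hd w) = i then ([hd w], tl w) else ([], w))" for w
  define xm where "xm h = (case h of [] \<Rightarrow> x | y # _ \<Rightarrow> sg_mult (S i) x (snd y))" for h :: "('i \<times> 'a) list"
  define hh where "hh s = Winv (fst (hs (W s)))" for s
  define tt where "tt s = Winv (snd (hs (W s)))" for s
  have ga: "goodw I S (W a)" using T_elem aT by blast
  have ga0: "goodw I S a0" "a0 \<noteq> [] \<longrightarrow> fst (last a0) \<noteq> i" using ga aw by (auto simp: goodw_append)
  have hs_good: "goodw I S (fst (hs w)) \<and> goodw I S (snd (hs w))" if "goodw I S w" for w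
    using that by (cases w) (auto simp: hs_def goodw_Cons)
  have hs_fst: "fst (hs w) = [] \<or> (\<exists>s\<in>sg_carrier (S i). fst (hs w) = [(i,s)])" if "goodw I S w" for w
    using that by (cases w) (auto simp: hs_def goodw_Cons)
  have hs_rec: "fp_mult S (fst (hs w)) (snd (hs w)) = w" if "goodw I S w" for w
  proof (cases w)
    case Nil then show ?thesis by (simp add: hs_def)
  next
    case (Cons y w')
    show ?thesis
    proof (cases "fst y = i")
      case True
      show ?thesis
      proof (cases "w' = []")
        case True then show ?thesis using Cons \<open>fst y = i\<close> by (simp add: hs_def)
      next
        case False
        then have "fst (hd w') \<noteq> fst y" using that Cons by (auto simp: goodw_Cons)
        then show ?thesis using Cons \<open>fst y = i\<close> False by (simp add: hs_def fp_mult_def)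
      qed
    next
      case False then show ?thesis using Cons by (simp add: hs_def)
    qed
  qed
  have key: "fp_mult S (W a) w = a0 @ (i, xm (fst (hs w))) # snd (hs w)" if "goodw I S w" for w
  proof (cases w)
    case Nil then show ?thesis using aw by (simp add: hs_def xm_def)
  next
    case (Cons y w0)
    obtain l b where y: "y = (l,b)" by (cases y)
    show ?thesis unfolding aw Cons y fpm_snoc_cons by (simp add: hs_def xm_def)
  qed
  have hhR: "hh s \<in> R" if "s \<in> sg_carrier T" for s
  proof -
    have g: "goodw I S (W s)" using T_elem that by blast
    from hs_fst[OF g] show ?thesis
    proof
      assume "fst (hs (W s)) = []"
      then show ?thesis using oneF(1) by (simp add: hh_def Winv_def)
    next
      assume "\<exists>s'\<in>sg_carrier (S i). fst (hs (W s)) = [(i,s')]"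
      then obtain s' where "s' \<in> sg_carrier (S i)" "fst (hs (W s)) = [(i,s')]" by blast
      then show ?thesis using letter_T by (simp add: hh_def Winv_def R_def W_def)
    qed
  qed
  have ttT: "tt s \<in> sg_carrier T" if "s \<in> sg_carrier T" for s
    using Winv_T hs_good T_elem that unfolding tt_def by blast
  have rec: "s = sg_mult T (hh s) (tt s)" if "s \<in> sg_carrier T" for s
  proof -
    have g: "goodw I S (W s)" using T_elem that by blast
    have "sg_mult T (hh s) (tt s) = Winv (fp_mult S (fst (hs (W s))) (snd (hs (W s))))"
      unfolding hh_def tt_def using Winv_mult hs_good[OF g] by blast
    also have "\<dots> = Winv (W s)" using hs_rec[OF g] by simp
    also have "\<dots> = s" using Winv_W that by blast
    finally show ?thesis by simp
  qed
  have projhh: "sg_mult U (Some x) (proj (hh s)) = Some (xm (fst (hs (W s))))" if "s \<in> sg_carrier T" for s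
  proof -
    have g: "goodw I S (W s)" using T_elem that by blast
    from hs_fst[OF g] show ?thesis
    proof
      assume h: "fst (hs (W s)) = []"
      then have "proj (hh s) = one1 (S i)" using oneF(2) by (simp add: hh_def Winv_def)
      then show ?thesis using one1_props(2)[OF Lx(4)] h by (simp add: xm_def)
    next
      assume "\<exists>s'\<in>sg_carrier (S i). fst (hs (W s)) = [(i,s')]"
      then obtain s' where "s' \<in> sg_carrier (S i)" "fst (hs (W s)) = [(i,s')]" by blast
      then show ?thesis by (simp add: hh_def Winv_def proj_def W_def xm_def ao_mult_Some)
    qed
  qed
  define a' where "a' = Winv a0"
  have a'T: "a' \<in> sg_carrier T" unfolding a'_def using Winv_T ga0(1) .
  have gx: "goodw I S [(i,x)]" using iI xC by (simp add: goodw_Cons)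
  have LT: "Some [(i,x)] \<in> sg_carrier T" using letter_T xC .
  have adec: "a = sg_mult T a' (Some [(i,x)])"
  proof -
    have "sg_mult T a' (Some [(i,x)]) = sg_mult T (Winv a0) (Winv [(i,x)])" by (simp add: a'_def Winv_def)
    also have "\<dots> = Winv (fp_mult S a0 [(i,x)])" using Winv_mult[OF ga0(1) gx] .
    also have "fp_mult S a0 [(i,x)] = a0 @ [(i,x)]" using ga0(2) by (simp add: fp_mult_def)
    also have "Winv (a0 @ [(i,x)]) = a" using Winv_W[OF aT] aw by simp
    finally show ?thesis by simp
  qed
  have Tas: "\<forall>p\<in>sg_carrier T. \<forall>q\<in>sg_carrier T. \<forall>r\<in>sg_carrier T.
      sg_mult T (sg_mult T p q) r = sg_mult T p (sg_mult T q r)"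
    using T_sg unfolding is_semigroup_def by blast
  have aemb: "sg_mult T a (emb u) = sg_mult T a' (emb (sg_mult U (Some x) u))" if u: "u \<in> sg_carrier U" for u
  proof -
    have eT: "emb u \<in> sg_carrier T" using emb_R[OF u] R_T by blast
    have "sg_mult T a (emb u) = sg_mult T (sg_mult T a' (Some [(i,x)])) (emb u)" using adec by simp
    also have "\<dots> = sg_mult T a' (sg_mult T (Some [(i,x)]) (emb u))" using Tas a'T LT eT by blast
    also have "sg_mult T (Some [(i,x)]) (emb u) = emb (sg_mult U (Some x) u)"
      using emb_hom[OF Lx(4) u] Lx(3) by simp
    finally show ?thesis .
  qed
  show ?thesis
  proof (rule transfer_up[where R=R and proj=proj and emb=emb and hh=hh and tt=tt and oo="one1 F" and x="Some x"])
    show "is_semigroup T" by (rule T_sg)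
    show "is_semigroup U" by (rule U_sg)
    show "R \<subseteq> sg_carrier T" by (rule R_T)
    show "\<forall>p\<in>R. proj p \<in> sg_carrier U" using proj_U by blast
    show "\<forall>u\<in>sg_carrier U. emb u \<in> R \<and> proj (emb u) = u" using emb_R by blast
    show "\<forall>u\<in>sg_carrier U. \<forall>v\<in>sg_carrier U. emb (sg_mult U u v) = sg_mult T (emb u) (emb v)"
      using emb_hom by blast
    show "a \<in> sg_carrier T" by (rule aT)
    show "Some x \<in> sg_carrier U" by (rule Lx(4))
    show "\<forall>s\<in>sg_carrier T. hh s \<in> R \<and> tt s \<in> sg_carrier T \<and> s = sg_mult T (hh s) (tt s)"
      using hhR ttT rec by blast
    show "\<forall>s\<in>sg_carrier T. \<forall>t\<in>sg_carrier T. sg_mult T a s = sg_mult T a t \<longrightarrow>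
        tt s = tt t \<and> sg_mult U (Some x) (proj (hh s)) = sg_mult U (Some x) (proj (hh t))"
    proof (intro ballI impI)
      fix s t assume s: "s \<in> sg_carrier T" and t: "t \<in> sg_carrier T" and eq: "sg_mult T a s = sg_mult T a t"
      have gs: "goodw I S (W s)" and gt: "goodw I S (W t)" using T_elem s t by blast+
      have "W (sg_mult T a s) = W (sg_mult T a t)" using eq by simp
      then have "fp_mult S (W a) (W s) = fp_mult S (W a) (W t)" using W_mult aT s t by metis
      then have "a0 @ (i, xm (fst (hs (W s)))) # snd (hs (W s)) = a0 @ (i, xm (fst (hs (W t)))) # snd (hs (W t))"
        using key[OF gs] key[OF gt] by simp
      then have e1: "xm (fst (hs (W s))) = xm (fst (hs (W t)))" "snd (hs (W s)) = snd (hs (W t))" by simp_all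
      show "tt s = tt t \<and> sg_mult U (Some x) (proj (hh s)) = sg_mult U (Some x) (proj (hh t))"
        using e1 projhh[OF s] projhh[OF t] by (simp add: tt_def)
    qed
    show "\<forall>u\<in>sg_carrier U. \<forall>v\<in>sg_carrier U. sg_mult U (Some x) u = sg_mult U (Some x) v \<longrightarrow>
        sg_mult T a (emb u) = sg_mult T a (emb v)"
      using aemb by metis
    show "\<forall>p\<in>R. p = emb (proj p) \<or> p = one1 F" using R_cases by blast
    show "one1 F \<in> R \<longrightarrow> sg_mult T a (one1 F) = sg_mult T a (emb (proj (one1 F)))"
    proof
      have o: "one1 (S i) \<in> sg_carrier U" using one1_props(1) .
      have "sg_mult T a (emb (proj (one1 F))) = sg_mult T a' (emb (sg_mult U (Some x) (one1 (S i))))"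
        using aemb[OF o] oneF(2) by simp
      also have "sg_mult U (Some x) (one1 (S i)) = Some x" using one1_props(2)[OF Lx(4)] by blast
      also have "sg_mult T a' (emb (Some x)) = a" using adec Lx(3) by simp
      also have "a = sg_mult T a (one1 F)" using one1F(2)[OF aT] by simp
      finally show "sg_mult T a (one1 F) = sg_mult T a (emb (proj (one1 F)))" by simp
    qed
    show "fin_gen_right_congruence U (r_ann U (Some x))" by (rule fg)
  qed
qed

end

theorem mainTheorem9:
  fixes I :: "'i set" and S :: "'i \<Rightarrow> 'a sgrp"
  assumes "\<forall>i\<in>I. is_semigroup (S i)"
  shows "fin_right_equated (adjoin_one (free_product I S)) \<longleftrightarrow>
         (\<forall>i\<in>I. fin_right_equated (adjoin_one (S i)))"
proof -
  interpret fpc I S using assms by unfold_locales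
  show ?thesis
  proof
    assume fT: "fin_right_equated T"
    show "\<forall>i\<in>I. fin_right_equated (adjoin_one (S i))"
    proof (intro ballI)
      fix i assume i: "i \<in> I"
      have sgU: "is_semigroup (adjoin_one (S i))" using ao_semigroup assms i by blast
      show "fin_right_equated (adjoin_one (S i))" unfolding fin_right_equated_def
      proof
        fix u assume u: "u \<in> sg_carrier (adjoin_one (S i))"
        from ao_carrier[OF u] show "fin_gen_right_congruence (adjoin_one (S i)) (r_ann (adjoin_one (S i)) u)"
        proof
          assume "u = None"
          then show ?thesis using diag_fg[OF sgU] u ao_mult_None(1) by metis
        next
          assume "\<exists>x\<in>sg_carrier (S i). u = Some x"
          then obtain x where x: "x \<in> sg_carrier (S i)" "u = Some x" by blast
          interpret fpi I S i x using i x(1) by unfold_locales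
          have "fin_gen_right_congruence T (r_ann T (Some [(i,x)]))"
            using fT Lx(1) R_T unfolding fin_right_equated_def by blast
          then show ?thesis using down_i x(2) by simp
        qed
      qed
    qed
  next
    assume fU: "\<forall>i\<in>I. fin_right_equated (adjoin_one (S i))"
    show "fin_right_equated T" unfolding fin_right_equated_def
    proof
      fix a assume aT: "a \<in> sg_carrier T"
      show "fin_gen_right_congruence T (r_ann T a)"
      proof (cases "W a = []")
        case True
        then have "a = None" "None \<in> sg_carrier T" using T_elem(2)[OF aT] aT by auto
        then show ?thesis using diag_fg[OF T_sg] None_mult(1) by metis
      next
        case False
        then obtain a0 i x where aw: "W a = a0 @ [(i,x)]" by (metis rev_exhaust surj_pair)
        have "goodw I S (W a)" using T_elem(1)[OF aT] .
        then have ix: "i \<in> I" "x \<in> sg_carrier (S i)" using aw by (simp_all add: goodw_append goodw_Cons)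
        interpret fpi I S i x using ix by unfold_locales
        have "fin_gen_right_congruence U (r_ann U (Some x))"
          using fU ix Lx(4) unfolding fin_right_equated_def by blast
        then show ?thesis using up_i[OF aT aw] by blast
      qed
    qed
  qed
qed

end
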